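(* Let $W$ be a non-negative random variable with finite mean, let $\theta>0$, and let $W^*$ have the law of $U^{1/\theta}(W+1)$, where $U\sim\mathcal U[0,1]$ is independent of $W$. Let $D_\theta$ have the generalized Dickman distribution $\mathcal D_\theta$. Then $$d_1(W,D_\theta)\le(1+\theta)\,d_1(W^*,W).$$
   Context: The generalized Dickman distribution $\mathcal D_\theta$ ($\theta>0$) is the unique law of a non-negative random variable $D_\theta$ satisfying $D_\theta=_d U^{1/\theta}(D_\theta+1)$ with $U\sim\mathcal U[0,1]$ independent of $D_\theta$. The Wasserstein distance is $d_1(X,Y)=\sup_{h\in \mathrm{Lip}_1}|Eh(X)-Eh(Y)|$, where $\mathrm{Lip}_1=\{h:|h(y)-h(x)|\le|y-x|\}$; it depends only on the laws of $X$ and $Y$. *)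

theory Defs
  imports "HOL-Probability.Probability"
begin

text \<open>Laws on the real line are represented as probability measures M with
  sets M = sets borel.\<close>

definition unif01 :: "real measure" where
  "unif01 = uniform_measure lborel {0..1}"

definition dickman_bias :: "real \<Rightarrow> real measure \<Rightarrow> real measure" where
  "dickman_bias \<theta> M = distr (M \<Otimes>\<^sub>M unif01) borel (\<lambda>(w, u). u powr (1 / \<theta>) * (w + 1))"

text \<open>D is the generalized Dickman distribution D_theta: the law of a non-negative
  random variable with D =_d U^(1/theta)(D+1).\<close>
definition is_gen_dickman :: "real \<Rightarrow> real measure \<Rightarrow> bool" where
  "is_gen_dickman \<theta> D \<longleftrightarrow> prob_space D \<and> sets D = sets borel \<and>
     (AE x in D. 0 \<le> x) \<and> dickman_bias \<theta> D = D"

definition Lip1 :: "(real \<Rightarrow> real) set" where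
  "Lip1 = {h. \<forall>x y. \<bar>h y - h x\<bar> \<le> \<bar>y - x\<bar>}"

definition wasserstein1 :: "real measure \<Rightarrow> real measure \<Rightarrow> ereal" where
  "wasserstein1 M N = (SUP h\<in>Lip1. ereal \<bar>(\<integral>x. h x \<partial>M) - (\<integral>x. h x \<partial>N)\<bar>)"

end

theory Submission
  imports Defs
begin


lemma unif_prob: "prob_space unif01"
  unfolding unif01_def by (rule prob_space_uniform_measure) auto

lemma unif_sets[simp, measurable_cong]: "sets unif01 = sets borel"
  unfolding unif01_def by simp

lemma unif_space[simp]: "space unif01 = UNIV"
  unfolding unif01_def by simp

lemma unif_AE: "AE u in unif01. 0 \<le> u \<and> u \<le> 1"
  unfolding unif01_def by (rule AE_uniform_measureI) auto

lemma powr_unit: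
  fixes u p :: real
  assumes "0 \<le> u" "u \<le> 1" "0 < p"
  shows "0 \<le> u powr p \<and> u powr p \<le> 1"
  using assms using assms powr_le1[of p u] by auto

lemma unif_integral_powr:
  assumes "\<theta> > 0"
  shows "integrable unif01 (\<lambda>u. u powr (1/\<theta>))"
    and "(\<integral>u. u powr (1/\<theta>) \<partial>unif01) = \<theta> / (1 + \<theta>)"
proof -
  interpret U: prob_space unif01 by (rule unif_prob)
  show int: "integrable unif01 (\<lambda>u. u powr (1/\<theta>))"
  proof (rule Bochner_Integration.integrable_bound[where f="\<lambda>_. 1::real"])
    show "integrable unif01 (\<lambda>_. 1::real)" by simp
    show "(\<lambda>u. u powr (1/\<theta>)) \<in> borel_measurable unif01" by simp
    show "AE u in unif01. norm (u powr (1/\<theta>)) \<le> norm (1::real)"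
      using unif_AE by eventually_elim (use assms powr_unit[of _ "1/\<theta>"] in auto)
  qed
  have hi: "((\<lambda>x. x powr (1/\<theta>)) has_integral (1 powr (1/\<theta>+1) / (1/\<theta>+1))) {0..1}"
    using assms by (intro has_integral_powr_from_0) (auto intro: less_trans[of _ 0 "1/\<theta>"])
  have e: "1 powr (1/\<theta>+1) / (1/\<theta>+1) = \<theta> / (1 + \<theta>)"
    using assms by (simp add: field_simps)
  have nn: "(\<integral>\<^sup>+x. ennreal (x powr (1/\<theta>)) * indicator {0..1} x \<partial>lborel) = ennreal (\<theta> / (1 + \<theta>))"
    using nn_integral_has_integral_lebesgue'[OF _ hi] e by simp
  have "(\<integral>u. u powr (1/\<theta>) \<partial>unif01) = enn2real (\<integral>\<^sup>+ x. ennreal (x powr (1/\<theta>)) \<partial>unif01)"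
    by (rule integral_eq_nn_integral) auto
  also have "(\<integral>\<^sup>+ x. ennreal (x powr (1/\<theta>)) \<partial>unif01) = ennreal (\<theta> / (1 + \<theta>))"
    unfolding unif01_def by (subst nn_integral_uniform_measure) (auto simp: nn divide_ennreal_def)
  finally show "(\<integral>u. u powr (1/\<theta>) \<partial>unif01) = \<theta> / (1 + \<theta>)"
    using assms by simp
qed



lemma bias_fubini:
  fixes M :: "real measure" and h :: "real \<Rightarrow> real"
  assumes th: "\<theta> > 0" and P: "prob_space M" and S: "sets M = sets borel"
    and hm: "h \<in> borel_measurable borel" and B: "B \<ge> 0"
    and hb: "\<And>x. \<bar>h x\<bar> \<le> A + B * \<bar>x\<bar>" and iM: "integrable M (\<lambda>x. B * \<bar>x\<bar>)"
  shows "integrable (M \<Otimes>\<^sub>M unif01) (\<lambda>(w,u). h (u powr (1/\<theta>) * (w+1)))"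
    and "integrable (dickman_bias \<theta> M) h"
    and "(\<integral>x. h x \<partial>dickman_bias \<theta> M) = (\<integral>w. (\<integral>u. h (u powr (1/\<theta>) * (w+1)) \<partial>unif01) \<partial>M)"
    and "(\<integral>x. h x \<partial>dickman_bias \<theta> M) = (\<integral>u. (\<integral>w. h (u powr (1/\<theta>) * (w+1)) \<partial>M) \<partial>unif01)"
    and "integrable unif01 (\<lambda>u. \<integral>w. h (u powr (1/\<theta>) * (w+1)) \<partial>M)"
proof -
  interpret M: prob_space M by (rule P)
  interpret U: prob_space unif01 by (rule unif_prob)
  interpret MU: pair_prob_space M unif01 ..
  note [measurable_cong] = S
  note [measurable] = hm
  let ?T = "\<lambda>(w::real, u::real). u powr (1/\<theta>) * (w+1)"
  have Tm: "?T \<in> borel_measurable (M \<Otimes>\<^sub>M unif01)" by measurable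
  have fm: "(\<lambda>(w,u). h (u powr (1/\<theta>) * (w+1))) \<in> borel_measurable (M \<Otimes>\<^sub>M unif01)"
    by measurable
  have AEb: "AE p in M \<Otimes>\<^sub>M unif01. \<bar>h (snd p powr (1/\<theta>) * (fst p+1))\<bar> \<le> A + B * (\<bar>fst p\<bar> + 1)"
  proof (rule MU.AE_pair_measure)
    show "{p \<in> space (M \<Otimes>\<^sub>M unif01). \<bar>h (snd p powr (1/\<theta>) * (fst p+1))\<bar> \<le> A + B * (\<bar>fst p\<bar> + 1)}
        \<in> sets (M \<Otimes>\<^sub>M unif01)" by measurable
    show "AE x in M. AE y in unif01. \<bar>h (snd (x,y) powr (1/\<theta>) * (fst (x,y)+1))\<bar> \<le> A + B * (\<bar>fst (x,y)\<bar> + 1)"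
    proof (rule AE_I2, rule AE_mp[OF unif_AE], rule AE_I2, safe)
      fix x y :: real assume y: "0 \<le> y" "y \<le> 1"
      have a: "0 \<le> y powr (1/\<theta>)" "y powr (1/\<theta>) \<le> 1" using powr_unit[of y "1/\<theta>"] y th by auto
      have "\<bar>y powr (1/\<theta>) * (x+1)\<bar> \<le> \<bar>x\<bar> + 1"
        using a by (auto simp: abs_mult intro!: mult_le_one order_trans[OF mult_right_mono[OF a(2)]])
      then have "B * \<bar>y powr (1/\<theta>) * (x+1)\<bar> \<le> B * (\<bar>x\<bar> + 1)" using B by (rule mult_left_mono)
      then show "\<bar>h (snd (x,y) powr (1/\<theta>) * (fst (x,y)+1))\<bar> \<le> A + B * (\<bar>fst (x,y)\<bar> + 1)"
        using hb[of "y powr (1/\<theta>) * (x+1)"] by simp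
    qed
  qed
  have iG: "integrable (M \<Otimes>\<^sub>M unif01) (\<lambda>p. A + B * (\<bar>fst p\<bar> + 1))"
  proof (rule MU.Fubini_integrable)
    show "(\<lambda>p. A + B * (\<bar>fst p\<bar> + 1)) \<in> borel_measurable (M \<Otimes>\<^sub>M unif01)" by measurable
    have "integrable M (\<lambda>x. \<bar>A + B * (\<bar>x\<bar> + 1)\<bar>)"
      using iM by (intro integrable_abs) (simp add: distrib_left add.assoc[symmetric])
    then show "integrable M (\<lambda>x. \<integral>y. norm (A + B * (\<bar>fst (x,y)\<bar> + 1)) \<partial>unif01)"
      by simp
    show "AE x in M. integrable unif01 (\<lambda>y. A + B * (\<bar>fst (x,y)\<bar> + 1))" by simp
  qed
  show int: "integrable (M \<Otimes>\<^sub>M unif01) (\<lambda>(w,u). h (u powr (1/\<theta>) * (w+1)))"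
  proof (rule Bochner_Integration.integrable_bound[OF iG fm])
    show "AE p in M \<Otimes>\<^sub>M unif01. norm ((\<lambda>(w,u). h (u powr (1/\<theta>) * (w+1))) p) \<le> norm (A + B * (\<bar>fst p\<bar> + 1))"
      using AEb by eventually_elim (auto split: prod.splits)
  qed
  have d: "dickman_bias \<theta> M = distr (M \<Otimes>\<^sub>M unif01) borel ?T"
    unfolding dickman_bias_def ..
  show "integrable (dickman_bias \<theta> M) h"
    unfolding d using int by (subst integrable_distr_eq[OF Tm]) (auto simp: case_prod_unfold)
  have eq: "(\<integral>x. h x \<partial>dickman_bias \<theta> M) = (\<integral>p. h (?T p) \<partial>(M \<Otimes>\<^sub>M unif01))"
    unfolding d by (rule integral_distr[OF Tm]) simp
  also have "\<dots> = (\<integral>p. (\<lambda>(w,u). h (u powr (1/\<theta>) * (w+1))) p \<partial>(M \<Otimes>\<^sub>M unif01))"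
    by (simp add: case_prod_unfold)
  finally have eq2: "(\<integral>x. h x \<partial>dickman_bias \<theta> M) = (\<integral>p. (\<lambda>(w,u). h (u powr (1/\<theta>) * (w+1))) p \<partial>(M \<Otimes>\<^sub>M unif01))" .
  show "(\<integral>x. h x \<partial>dickman_bias \<theta> M) = (\<integral>w. (\<integral>u. h (u powr (1/\<theta>) * (w+1)) \<partial>unif01) \<partial>M)"
    unfolding eq2 using MU.integral_fst[of "\<lambda>w u. h (u powr (1/\<theta>) * (w+1))"] int by simp
  show "(\<integral>x. h x \<partial>dickman_bias \<theta> M) = (\<integral>u. (\<integral>w. h (u powr (1/\<theta>) * (w+1)) \<partial>M) \<partial>unif01)"
    unfolding eq2 using MU.integral_snd[of "\<lambda>w u. h (u powr (1/\<theta>) * (w+1))"] int by simp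
  show "integrable unif01 (\<lambda>u. \<integral>w. h (u powr (1/\<theta>) * (w+1)) \<partial>M)"
    using MU.integrable_snd[of "\<lambda>w u. h (u powr (1/\<theta>) * (w+1))"] int by simp
qed



lemma pw_ineq:
  fixes a d K :: real
  assumes "0 \<le> a" "a \<le> 1" "0 \<le> d" "0 \<le> K"
  shows "min \<bar>a * (d+1)\<bar> K \<le> a + min \<bar>d\<bar> K - (1-a) * (if \<bar>d\<bar> \<le> K then \<bar>d\<bar> else 0)"
proof (cases "d \<le> K")
  case True
  have "\<bar>a * (d+1)\<bar> = a*d + a" using assms by (simp add: algebra_simps)
  then show ?thesis using True assms by (simp add: algebra_simps)
next
  case False
  then show ?thesis using assms by auto
qed

lemma dickman_trunc:
  assumes th: "\<theta> > 0" and D: "is_gen_dickman \<theta> D" and K: "0 \<le> K"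
  shows "(\<integral>x. (if \<bar>x\<bar> \<le> K then \<bar>x\<bar> else 0) \<partial>D) \<le> \<theta>"
proof -
  have P: "prob_space D" and S: "sets D = sets borel" and nn: "AE x in D. 0 \<le> x"
    and fx: "dickman_bias \<theta> D = D" using D unfolding is_gen_dickman_def by auto
  interpret D: prob_space D by (rule P)
  interpret U: prob_space unif01 by (rule unif_prob)
  note [measurable_cong] = S
  define c where "c = \<theta> / (1 + \<theta>)"
  let ?a = "\<lambda>u::real. u powr (1/\<theta>)"
  let ?h = "\<lambda>x::real. min \<bar>x\<bar> K"
  let ?g = "\<lambda>x::real. if \<bar>x\<bar> \<le> K then \<bar>x\<bar> else 0"
  have ia: "integrable unif01 ?a" and ca: "(\<integral>u. ?a u \<partial>unif01) = c"
    using unif_integral_powr[OF th] by (auto simp: c_def)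
  have hb: "\<And>x. \<bar>?h x\<bar> \<le> K + 0 * \<bar>x\<bar>" using K by auto
  have ig: "integrable D ?g"
    by (rule Bochner_Integration.integrable_bound[where f="\<lambda>_. K"]) (use K in auto)
  have ih: "integrable D ?h"
    by (rule Bochner_Integration.integrable_bound[where f="\<lambda>_. K"]) (use K in auto)
  have "(\<integral>x. ?h x \<partial>D) = (\<integral>x. ?h x \<partial>dickman_bias \<theta> D)" by (simp add: fx)
  also have "\<dots> = (\<integral>w. (\<integral>u. ?h (?a u * (w+1)) \<partial>unif01) \<partial>D)"
    by (rule bias_fubini(3)[OF th P S _ order_refl hb]) auto
  also have "\<dots> \<le> (\<integral>w. c + ?h w - (1 - c) * ?g w \<partial>D)"
  proof (rule integral_mono_AE)
    show "integrable D (\<lambda>w. c + ?h w - (1 - c) * ?g w)" using ig ih by auto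
    show "integrable D (\<lambda>w. \<integral>u. ?h (?a u * (w+1)) \<partial>unif01)"
    proof (rule Bochner_Integration.integrable_bound[where f="\<lambda>_. K"])
      show "AE w in D. norm (\<integral>u. ?h (?a u * (w+1)) \<partial>unif01) \<le> norm K"
      proof (rule AE_I2)
        fix w
        have i1: "integrable unif01 (\<lambda>u. ?h (?a u * (w+1)))"
          by (rule Bochner_Integration.integrable_bound[where f="\<lambda>_. K"]) (use K in auto)
        have "0 \<le> (\<integral>u. ?h (?a u * (w+1)) \<partial>unif01)" by (rule integral_nonneg_AE) (use K in auto)
        moreover have "(\<integral>u. ?h (?a u * (w+1)) \<partial>unif01) \<le> K"
          by (rule U.integral_le_const[OF i1]) auto
        ultimately show "norm (\<integral>u. ?h (?a u * (w+1)) \<partial>unif01) \<le> norm K" using K by simp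
      qed
    qed (use K in auto)
    show "AE w in D. (\<integral>u. ?h (?a u * (w+1)) \<partial>unif01) \<le> c + ?h w - (1 - c) * ?g w"
      using nn
    proof eventually_elim
      fix w :: real assume w: "0 \<le> w"
      have "(\<integral>u. ?h (?a u * (w+1)) \<partial>unif01) \<le> (\<integral>u. ?a u + ?h w - (1 - ?a u) * ?g w \<partial>unif01)"
      proof (rule integral_mono_AE)
        show "integrable unif01 (\<lambda>u. ?h (?a u * (w+1)))"
          by (rule Bochner_Integration.integrable_bound[where f="\<lambda>_. K"]) (use K in auto)
        show "integrable unif01 (\<lambda>u. ?a u + ?h w - (1 - ?a u) * ?g w)"
          using ia by (auto simp: algebra_simps)
        show "AE u in unif01. ?h (?a u * (w+1)) \<le> ?a u + ?h w - (1 - ?a u) * ?g w"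
          using unif_AE
        proof eventually_elim
          fix u :: real assume "0 \<le> u \<and> u \<le> 1"
          then have "0 \<le> ?a u" "?a u \<le> 1" using powr_unit[of u "1/\<theta>"] th by auto
          then show "?h (?a u * (w+1)) \<le> ?a u + ?h w - (1 - ?a u) * ?g w"
            using pw_ineq[of "?a u" w K] w K by simp
        qed
      qed
      also have "\<dots> = c + ?h w - (1 - c) * ?g w"
        using ia ca by (simp add: algebra_simps U.prob_space[simplified])
      finally show "(\<integral>u. ?h (?a u * (w+1)) \<partial>unif01) \<le> c + ?h w - (1 - c) * ?g w" .
    qed
  qed
  also have "\<dots> = c + (\<integral>x. ?h x \<partial>D) - (1 - c) * (\<integral>x. ?g x \<partial>D)"
    using ig ih by (simp add: D.prob_space)
  finally have "(1 - c) * (\<integral>x. ?g x \<partial>D) \<le> c" by simp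
  moreover have "1 - c = 1 / (1 + \<theta>)" using th by (simp add: c_def field_simps)
  ultimately have "(1 + \<theta>) * (\<integral>x. ?g x \<partial>D) \<le> (1 + \<theta>) * \<theta>" using th by (simp add: c_def field_simps)
  then show ?thesis using th by (simp add: mult_le_cancel_left_pos)
qed



lemma dickman_integrable:
  assumes th: "\<theta> > 0" and D: "is_gen_dickman \<theta> D"
  shows "integrable D (\<lambda>x. x)"
proof -
  have P: "prob_space D" and S: "sets D = sets borel"
    using D unfolding is_gen_dickman_def by auto
  interpret D: prob_space D by (rule P)
  note [measurable_cong] = S
  define g where "g = (\<lambda>(n::nat) (x::real). ennreal (if \<bar>x\<bar> \<le> real n then \<bar>x\<bar> else 0))"
  have gm: "\<And>n. g n \<in> borel_measurable D" unfolding g_def by measurable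
  have inc: "incseq g"
    unfolding g_def by (auto simp: incseq_def le_fun_def intro!: ennreal_leI)
  have sup: "(SUP n. g n x) = ennreal \<bar>x\<bar>" for x
  proof (rule antisym)
    show "(SUP n. g n x) \<le> ennreal \<bar>x\<bar>" by (rule SUP_least) (auto simp: g_def intro!: ennreal_leI)
    have "g (nat \<lceil>\<bar>x\<bar>\<rceil>) x = ennreal \<bar>x\<bar>" unfolding g_def by (simp add: real_nat_ceiling_ge)
    then show "ennreal \<bar>x\<bar> \<le> (SUP n. g n x)" by (metis SUP_upper UNIV_I)
  qed
  have bnd: "integral\<^sup>N D (g n) \<le> ennreal \<theta>" for n
  proof -
    have ig: "integrable D (\<lambda>x. if \<bar>x\<bar> \<le> real n then \<bar>x\<bar> else 0)"
      by (rule Bochner_Integration.integrable_bound[where f="\<lambda>_. real n"]) auto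
    have "integral\<^sup>N D (g n) = ennreal (\<integral>x. (if \<bar>x\<bar> \<le> real n then \<bar>x\<bar> else 0) \<partial>D)"
      unfolding g_def by (rule nn_integral_eq_integral[OF ig]) auto
    also have "\<dots> \<le> ennreal \<theta>"
      by (intro ennreal_leI dickman_trunc[OF th D]) auto
    finally show ?thesis .
  qed
  have "(\<integral>\<^sup>+x. ennreal \<bar>x\<bar> \<partial>D) = (SUP n. integral\<^sup>N D (g n))"
    unfolding sup[symmetric] by (rule nn_integral_monotone_convergence_SUP[OF inc gm])
  also have "\<dots> \<le> ennreal \<theta>" by (rule SUP_least) (rule bnd)
  finally have "(\<integral>\<^sup>+x. ennreal (norm x) \<partial>D) < \<infinity>" by (simp add: le_less_trans)
  then show ?thesis by (intro integrableI_bounded) auto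
qed



lemma Lip1_bound: "h \<in> Lip1 \<Longrightarrow> \<bar>h x\<bar> \<le> \<bar>h 0\<bar> + 1 * \<bar>x\<bar>"
proof -
  assume "h \<in> Lip1"
  then have "\<bar>h x - h 0\<bar> \<le> \<bar>x - 0\<bar>" unfolding Lip1_def by blast
  then show ?thesis by linarith
qed

lemma Lip1_meas: "h \<in> Lip1 \<Longrightarrow> h \<in> borel_measurable borel"
proof (intro borel_measurable_continuous_onI)
  assume h: "h \<in> Lip1"
  show "continuous_on UNIV h"
    unfolding continuous_on_iff
  proof (intro ballI allI impI)
    fix x :: real and e :: real assume e: "e > 0"
    show "\<exists>d>0. \<forall>x'\<in>UNIV. dist x' x < d \<longrightarrow> dist (h x') (h x) < e"
    proof (intro exI[of _ e] conjI ballI impI)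
      fix x' :: real assume "dist x' x < e"
      moreover have "\<bar>h x' - h x\<bar> \<le> \<bar>x' - x\<bar>" using h unfolding Lip1_def by blast
      ultimately show "dist (h x') (h x) < e" unfolding dist_real_def by linarith
    qed (rule e)
  qed
qed

lemma Lip1_int:
  assumes "prob_space M" "sets M = sets borel" "integrable M (\<lambda>x. x)" "h \<in> Lip1"
  shows "integrable M h"
proof -
  note [measurable_cong] = assms(2)
  note [measurable] = Lip1_meas[OF assms(4)]
  interpret prob_space M by fact
  show ?thesis
  proof (rule Bochner_Integration.integrable_bound[where f="\<lambda>x. \<bar>h 0\<bar> + \<bar>x\<bar>"])
    show "integrable M (\<lambda>x. \<bar>h 0\<bar> + \<bar>x\<bar>)"
      using assms(3) by (intro Bochner_Integration.integrable_add integrable_abs) auto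
    show "h \<in> borel_measurable M" by measurable
    show "AE x in M. norm (h x) \<le> norm (\<bar>h 0\<bar> + \<bar>x\<bar>)"
    proof (rule AE_I2)
      fix x show "norm (h x) \<le> norm (\<bar>h 0\<bar> + \<bar>x\<bar>)" using Lip1_bound[OF assms(4), of x] by simp
    qed
  qed
qed

lemma Lip1_diff:
  assumes "prob_space M" "sets M = sets borel" "integrable M (\<lambda>x. x)"
    and "prob_space N" "sets N = sets borel" "integrable N (\<lambda>x. x)" and h: "h \<in> Lip1"
  shows "\<bar>(\<integral>x. h x \<partial>M) - (\<integral>x. h x \<partial>N)\<bar> \<le> (\<integral>x. \<bar>x\<bar> \<partial>M) + (\<integral>x. \<bar>x\<bar> \<partial>N)"
proof -
  interpret M: prob_space M by fact
  interpret N: prob_space N by fact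
  have iM: "integrable M h" and iN: "integrable N h" using Lip1_int[OF assms(1-3) h] Lip1_int[OF assms(4-6) h] by auto
  have b: "\<bar>h x - h 0\<bar> \<le> \<bar>x\<bar>" for x
  proof -
    have "\<bar>h x - h 0\<bar> \<le> \<bar>x - 0\<bar>" using h unfolding Lip1_def by blast
    then show ?thesis by simp
  qed
  have eM: "(\<integral>x. h x \<partial>M) = (\<integral>x. h x - h 0 \<partial>M) + h 0" using iM by (simp add: M.prob_space)
  have eN: "(\<integral>x. h x \<partial>N) = (\<integral>x. h x - h 0 \<partial>N) + h 0" using iN by (simp add: N.prob_space)
  have "\<bar>\<integral>x. h x - h 0 \<partial>M\<bar> \<le> (\<integral>x. \<bar>h x - h 0\<bar> \<partial>M)"
    by (rule integral_abs_bound)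
  also have "\<dots> \<le> (\<integral>x. \<bar>x\<bar> \<partial>M)"
    by (rule integral_mono) (use iM assms(3) b in \<open>simp_all\<close>)
  finally have 1: "\<bar>\<integral>x. h x - h 0 \<partial>M\<bar> \<le> (\<integral>x. \<bar>x\<bar> \<partial>M)" .
  have "\<bar>\<integral>x. h x - h 0 \<partial>N\<bar> \<le> (\<integral>x. \<bar>h x - h 0\<bar> \<partial>N)"
    by (rule integral_abs_bound)
  also have "\<dots> \<le> (\<integral>x. \<bar>x\<bar> \<partial>N)"
    by (rule integral_mono) (use iN assms(6) b in \<open>simp_all\<close>)
  finally have 2: "\<bar>\<integral>x. h x - h 0 \<partial>N\<bar> \<le> (\<integral>x. \<bar>x\<bar> \<partial>N)" .
  note 1 2
  then show ?thesis unfolding eM eN by linarith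
qed

lemma id_Lip1: "(\<lambda>x. x) \<in> Lip1" unfolding Lip1_def by auto

lemma w1_ge: "h \<in> Lip1 \<Longrightarrow> ereal \<bar>(\<integral>x. h x \<partial>M) - (\<integral>x. h x \<partial>N)\<bar> \<le> wasserstein1 M N"
  unfolding wasserstein1_def by (rule SUP_upper)

lemma w1_nonneg: "0 \<le> wasserstein1 M N"
proof -
  have "ereal 0 \<le> ereal \<bar>(\<integral>x. x \<partial>M) - (\<integral>x. x \<partial>N)\<bar>" by simp
  also have "\<dots> \<le> wasserstein1 M N" by (rule w1_ge[OF id_Lip1])
  finally show ?thesis by (simp add: zero_ereal_def)
qed



lemma scaled_Lip1:
  assumes h: "h \<in> Lip1" and a: "a > 0"
  shows "(\<lambda>x. h (a * (x + 1)) / a) \<in> Lip1"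
  unfolding Lip1_def
proof (intro CollectI allI)
  fix x y :: real
  have "\<bar>h (a * (y + 1)) - h (a * (x + 1))\<bar> \<le> \<bar>a * (y + 1) - a * (x + 1)\<bar>"
    using h unfolding Lip1_def by blast
  also have "\<dots> = \<bar>a * (y - x)\<bar>" by (simp add: algebra_simps)
  also have "\<dots> = a * \<bar>y - x\<bar>" using a by (simp add: abs_mult)
  finally have "\<bar>h (a * (y + 1)) - h (a * (x + 1))\<bar> / a \<le> \<bar>y - x\<bar>"
    using a by (simp add: divide_le_eq mult.commute)
  then show "\<bar>h (a * (y + 1)) / a - h (a * (x + 1)) / a\<bar> \<le> \<bar>y - x\<bar>"
    using a by (simp add: diff_divide_distrib[symmetric])
qed

lemma contraction:
  assumes th: "\<theta> > 0"
    and PW: "prob_space W" and SW: "sets W = sets borel" and iW: "integrable W (\<lambda>x. x)"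
    and PD: "prob_space D" and SD: "sets D = sets borel" and iD: "integrable D (\<lambda>x. x)"
    and fx: "dickman_bias \<theta> D = D"
    and r: "wasserstein1 W D = ereal r"
    and h: "h \<in> Lip1"
  shows "\<bar>(\<integral>x. h x \<partial>dickman_bias \<theta> W) - (\<integral>x. h x \<partial>D)\<bar> \<le> \<theta> / (1 + \<theta>) * r"
proof -
  interpret W: prob_space W by fact
  interpret D: prob_space D by fact
  interpret U: prob_space unif01 by (rule unif_prob)
  have hm: "h \<in> borel_measurable borel" by (rule Lip1_meas[OF h])
  have hb: "\<And>x. \<bar>h x\<bar> \<le> \<bar>h 0\<bar> + 1 * \<bar>x\<bar>" by (rule Lip1_bound[OF h])
  have iW1: "integrable W (\<lambda>x. 1 * \<bar>x\<bar>)" using iW by simp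
  have iD1: "integrable D (\<lambda>x. 1 * \<bar>x\<bar>)" using iD by simp
  let ?a = "\<lambda>u::real. u powr (1/\<theta>)"
  define FW where "FW = (\<lambda>u. \<integral>w. h (?a u * (w+1)) \<partial>W)"
  define FD where "FD = (\<lambda>u. \<integral>w. h (?a u * (w+1)) \<partial>D)"
  have eW: "(\<integral>x. h x \<partial>dickman_bias \<theta> W) = (\<integral>u. FW u \<partial>unif01)"
    and iFW: "integrable unif01 FW"
    unfolding FW_def using bias_fubini(4,5)[OF th PW SW hm _ hb iW1] by auto
  have eD: "(\<integral>x. h x \<partial>D) = (\<integral>u. FD u \<partial>unif01)"
    and iFD: "integrable unif01 FD"
    unfolding FD_def using bias_fubini(4,5)[OF th PD SD hm _ hb iD1] fx by auto
  have ia: "integrable unif01 ?a" and ca: "(\<integral>u. ?a u \<partial>unif01) = \<theta> / (1 + \<theta>)"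
    using unif_integral_powr[OF th] by auto
  have key: "AE u in unif01. \<bar>FW u - FD u\<bar> \<le> ?a u * r"
    using unif_AE
  proof eventually_elim
    fix u :: real assume "0 \<le> u \<and> u \<le> 1"
    then have a0: "0 \<le> ?a u" using powr_unit[of u "1/\<theta>"] th by auto
    show "\<bar>FW u - FD u\<bar> \<le> ?a u * r"
    proof (cases "?a u = 0")
      case True
      then show ?thesis unfolding FW_def FD_def by (simp add: W.prob_space D.prob_space)
    next
      case False
      then have ap: "?a u > 0" using a0 by simp
      let ?g = "\<lambda>x. h (?a u * (x + 1)) / ?a u"
      have g: "?g \<in> Lip1" by (rule scaled_Lip1[OF h ap])
      have "ereal \<bar>(\<integral>x. ?g x \<partial>W) - (\<integral>x. ?g x \<partial>D)\<bar> \<le> ereal r"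
        using w1_ge[OF g, of W D] r by simp
      then have "\<bar>FW u / ?a u - FD u / ?a u\<bar> \<le> r" unfolding FW_def FD_def by simp
      then have "\<bar>FW u - FD u\<bar> / ?a u \<le> r" using ap by (simp add: diff_divide_distrib[symmetric])
      then show ?thesis using ap by (simp add: divide_le_eq mult.commute)
    qed
  qed
  have "\<bar>(\<integral>u. FW u \<partial>unif01) - (\<integral>u. FD u \<partial>unif01)\<bar> = \<bar>\<integral>u. FW u - FD u \<partial>unif01\<bar>"
    using iFW iFD by simp
  also have "\<dots> \<le> (\<integral>u. \<bar>FW u - FD u\<bar> \<partial>unif01)" by (rule integral_abs_bound)
  also have "\<dots> \<le> (\<integral>u. ?a u * r \<partial>unif01)"
    by (rule integral_mono_AE) (use iFW iFD ia key in auto)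
  also have "\<dots> = \<theta> / (1 + \<theta>) * r" using ca by simp
  finally show ?thesis unfolding eW eD .
qed

theorem theorem1p5:
  fixes \<theta> :: real and W D :: "real measure"
  assumes "\<theta> > 0"
    and "prob_space W" and "sets W = sets borel"
    and "AE x in W. 0 \<le> x" and "integrable W (\<lambda>x. x)"
    and "is_gen_dickman \<theta> D"
  shows "wasserstein1 W D \<le> ereal (1 + \<theta>) * wasserstein1 (dickman_bias \<theta> W) W"
proof -
  note th = assms(1) and PW = assms(2) and SW = assms(3) and iW = assms(5)
  have PD: "prob_space D" and SD: "sets D = sets borel" and fx: "dickman_bias \<theta> D = D"
    using assms(6) unfolding is_gen_dickman_def by auto
  have iD: "integrable D (\<lambda>x. x)" by (rule dickman_integrable[OF th assms(6)])
  have fin: "wasserstein1 W D \<le> ereal ((\<integral>x. \<bar>x\<bar> \<partial>W) + (\<integral>x. \<bar>x\<bar> \<partial>D))"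
    unfolding wasserstein1_def
    by (rule SUP_least) (use Lip1_diff[OF PW SW iW PD SD iD] in simp)
  obtain r where r: "wasserstein1 W D = ereal r"
    using fin w1_nonneg[of W D] by (cases "wasserstein1 W D") auto
  show ?thesis
  proof (cases "wasserstein1 (dickman_bias \<theta> W) W")
    case PInf
    then show ?thesis using th by simp
  next
    case MInf
    then show ?thesis using w1_nonneg[of "dickman_bias \<theta> W" W] by simp
  next
    case (real e)
    have "wasserstein1 W D \<le> ereal (e + \<theta> / (1 + \<theta>) * r)"
      unfolding wasserstein1_def
    proof (rule SUP_least)
      fix h assume h: "h \<in> Lip1"
      have 1: "\<bar>(\<integral>x. h x \<partial>dickman_bias \<theta> W) - (\<integral>x. h x \<partial>W)\<bar> \<le> e"
        using w1_ge[OF h, of "dickman_bias \<theta> W" W] real by simp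
      have 2: "\<bar>(\<integral>x. h x \<partial>dickman_bias \<theta> W) - (\<integral>x. h x \<partial>D)\<bar> \<le> \<theta> / (1 + \<theta>) * r"
        by (rule contraction[OF th PW SW iW PD SD iD fx r h])
      show "ereal \<bar>(\<integral>x. h x \<partial>W) - (\<integral>x. h x \<partial>D)\<bar> \<le> ereal (e + \<theta> / (1 + \<theta>) * r)"
        using 1 2 by simp
    qed
    then have "r \<le> e + \<theta> / (1 + \<theta>) * r" using r by simp
    then have "r * (1 + \<theta>) \<le> e * (1 + \<theta>) + \<theta> * r" using th by (simp add: field_simps)
    then have "r \<le> (1 + \<theta>) * e" by (simp add: algebra_simps)
    then show ?thesis using r real by simp
  qed
qed

end
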